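(* Let $N_t\ge 1$, let $\mathbf{g}_1,\mathbf{g}_2,\mathbf{h}_c\in\mathbb{C}^{N_t}$, let $t_1,t_2>0$, $\sigma^2>0$, $P_{\max}>0$ and $\bar R_{\min}\ge 0$, and set $\bar\gamma_{\min}=2^{\bar R_{\min}}-1$. Consider the sum-of-ratios problem $$(\mathrm{P1}):\quad \min_{\mathbf{w}\in\mathbb{C}^{N_t}}\ f(\mathbf{w})=\frac{t_1}{|\mathbf{g}_1^{\mathrm H}\mathbf{w}|^2}+\frac{t_2}{|\mathbf{g}_2^{\mathrm H}\mathbf{w}|^2}\quad\text{s.t.}\quad \log_2\!\Big(1+\frac{|\mathbf{h}_c^{\mathrm H}\mathbf{w}|^2}{\sigma^2}\Big)\ge \bar R_{\min},\qquad \mathbf{w}^{\mathrm H}\mathbf{w}\le P_{\max},$$ and the problem $$(\mathrm{P2}):\quad \min_{\mathbf{w}\in\mathbb{C}^{N_t},\ \tilde{\mathbf{y}}=(\tilde y_1,\tilde y_2)\in\mathbb{R}^2}\ \tilde F(\mathbf{w},\tilde{\mathbf{y}})=\sum_{i=1}^{2}\frac{1}{\big[\,2\tilde y_i\sqrt{|\mathbf{g}_i^{\mathrm H}\mathbf{w}|^2}-\tilde y_i^{2}\,t_i\,\big]_+}\quad\text{s.t.}\quad \mathbf{h}_c^{\mathrm H}\mathbf{w}\ge\sqrt{\sigma^2\bar\gamma_{\min}},\qquad \mathbf{w}^{\mathrm H}\mathbf{w}\le P_{\max},$$ where the constraint $\mathbf{h}_c^{\mathrm H}\mathbf{w}\ge\sqrt{\sigma^2\bar\gamma_{\min}}$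 means that $\mathbf{h}_c^{\mathrm H}\mathbf{w}$ is a real number at least $\sqrt{\sigma^2\bar\gamma_{\min}}$. Then (P1) and (P2) are equivalent: they have the same optimal value.
   Context: $[x]_+=\max\{x,0\}$, with the convention $1/[x]_+=+\infty$ when $x\le 0$, and likewise $t_i/0=+\infty$ in $f$. $(\cdot)^{\mathrm H}$ denotes conjugate transpose. In the paper's application, $\mathbf{g}_1$ is the projected sensing vector $\mathbf{h}_s$, $\mathbf{g}_2$ is the projected distance vector $\tilde{\boldsymbol{\alpha}}_{\rho_s}$, $t_i=[\tilde{\mathbf{T}}]_{(i,i)}$ are diagonal entries of a coordinate-transformation weight matrix, $\mathbf{h}_c$ is the communication channel, $\mathbf{w}$ is the beamformer and $\tilde{\mathbf{y}}$ are auxiliary variables; these interpretations are not needed for the statement. *)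

theory Defs
  imports "HOL-Analysis.Analysis"
begin

definition herm :: "complex ^ 'n \<Rightarrow> complex ^ 'n \<Rightarrow> complex" where
  "herm g w = (\<Sum>i\<in>UNIV. cnj (g $ i) * w $ i)"

definition ediv :: "real \<Rightarrow> real \<Rightarrow> ereal" where
  "ediv t x = (if x \<le> 0 then \<infinity> else ereal (t / x))"

definition inv_pos :: "real \<Rightarrow> ereal" where
  "inv_pos x = (if x \<le> 0 then \<infinity> else ereal (1 / x))"

definition f_P1 :: "real \<Rightarrow> real \<Rightarrow> complex ^ 'n \<Rightarrow> complex ^ 'n \<Rightarrow> complex ^ 'n \<Rightarrow> ereal" where
  "f_P1 t1 t2 g1 g2 w = ediv t1 ((cmod (herm g1 w))\<^sup>2) + ediv t2 ((cmod (herm g2 w))\<^sup>2)"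

definition F_P2 :: "real \<Rightarrow> real \<Rightarrow> complex ^ 'n \<Rightarrow> complex ^ 'n \<Rightarrow> complex ^ 'n \<Rightarrow> real \<Rightarrow> real \<Rightarrow> ereal" where
  "F_P2 t1 t2 g1 g2 w y1 y2 =
     inv_pos (2 * y1 * sqrt ((cmod (herm g1 w))\<^sup>2) - y1\<^sup>2 * t1)
   + inv_pos (2 * y2 * sqrt ((cmod (herm g2 w))\<^sup>2) - y2\<^sup>2 * t2)"

definition feasible_P1 :: "complex ^ 'n \<Rightarrow> real \<Rightarrow> real \<Rightarrow> real \<Rightarrow> complex ^ 'n \<Rightarrow> bool" where
  "feasible_P1 hc \<sigma>2 Pmax Rmin w \<longleftrightarrow>
     log 2 (1 + (cmod (herm hc w))\<^sup>2 / \<sigma>2) \<ge> Rmin \<and> Re (herm w w) \<le> Pmax"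

definition feasible_P2 :: "complex ^ 'n \<Rightarrow> real \<Rightarrow> real \<Rightarrow> real \<Rightarrow> complex ^ 'n \<Rightarrow> bool" where
  "feasible_P2 hc \<sigma>2 Pmax Rmin w \<longleftrightarrow>
     herm hc w \<in> \<real> \<and> Re (herm hc w) \<ge> sqrt (\<sigma>2 * (2 powr Rmin - 1)) \<and> Re (herm w w) \<le> Pmax"

end

theory Submission
  imports Defs
begin

lemma herm_scale: "herm g (\<chi> i. z * w $ i) = z * herm g w"
  unfolding herm_def by (simp add: sum_distrib_left algebra_simps)

lemma herm_scale2: "herm (\<chi> i. z * w $ i) (\<chi> i. z * w $ i) = (cmod z)\<^sup>2 * herm w w"
proof -
  have "herm (\<chi> i. z * w $ i) (\<chi> i. z * w $ i) = (cnj z * z) * herm w w"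
    unfolding herm_def by (simp add: sum_distrib_left algebra_simps)
  also have "cnj z * z = (cmod z)\<^sup>2" by (metis complex_norm_square mult.commute)
  finally show ?thesis .
qed

lemma key_le:
  fixes t a y :: real
  assumes t: "t > 0" and a: "a \<ge> 0"
  shows "ediv t (a\<^sup>2) \<le> inv_pos (2 * y * sqrt (a\<^sup>2) - y\<^sup>2 * t)"
proof (cases "2 * y * a - y\<^sup>2 * t \<le> 0")
  case True then show ?thesis using a by (simp add: inv_pos_def)
next
  case False
  have "a \<noteq> 0"
  proof
    assume "a = 0"
    then have "2 * y * a - y\<^sup>2 * t = - (y\<^sup>2 * t)" by simp
    also have "\<dots> \<le> 0" using t by simp
    finally show False using False by simp
  qed
  then have a0: "a > 0" using a by simp
  have "(a - y*t)\<^sup>2 \<ge> 0" by simp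
  then have "t * (2 * y * a - y\<^sup>2 * t) \<le> a\<^sup>2" by (simp add: power2_eq_square algebra_simps)
  then have "t / a\<^sup>2 \<le> 1 / (2 * y * a - y\<^sup>2 * t)" using False a0 t
    by (simp add: divide_simps mult.commute)
  then show ?thesis using False a0 a by (simp add: inv_pos_def ediv_def)
qed

lemma key_eq:
  fixes t a :: real
  assumes t: "t > 0" and a: "a \<ge> 0"
  shows "inv_pos (2 * (a/t) * sqrt (a\<^sup>2) - (a/t)\<^sup>2 * t) = ediv t (a\<^sup>2)"
proof (cases "a = 0")
  case True then show ?thesis by (simp add: inv_pos_def ediv_def)
next
  case False
  then have a0: "a > 0" using a by simp
  have e: "2 * (a/t) * sqrt (a\<^sup>2) - (a/t)\<^sup>2 * t = a\<^sup>2 / t" using a t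
    by (simp add: power2_eq_square field_simps)
  have "a\<^sup>2 / t > 0" using a0 t by simp
  then have "\<not> a\<^sup>2 / t \<le> 0" by linarith
  then show ?thesis unfolding e inv_pos_def ediv_def using a0 t by simp
qed

lemma F_ge: assumes "t1 > 0" "t2 > 0"
  shows "f_P1 t1 t2 g1 g2 w \<le> F_P2 t1 t2 g1 g2 w y1 y2"
  unfolding f_P1_def F_P2_def
  by (rule add_mono; rule key_le; simp add: assms)

lemma F_eq: assumes "t1 > 0" "t2 > 0"
  shows "F_P2 t1 t2 g1 g2 w (cmod (herm g1 w) / t1) (cmod (herm g2 w) / t2) = f_P1 t1 t2 g1 g2 w"
  unfolding f_P1_def F_P2_def using key_eq assms by simp

lemma feas_iff:
  assumes s: "\<sigma>2 > 0" and R: "Rmin \<ge> 0" and x: "x \<ge> 0"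
  shows "log 2 (1 + x / \<sigma>2) \<ge> Rmin \<longleftrightarrow> x \<ge> \<sigma>2 * (2 powr Rmin - 1)"
proof -
  have pos: "1 + x / \<sigma>2 > 0" using x s by (simp add: add_pos_nonneg)
  have "log 2 (1 + x / \<sigma>2) \<ge> Rmin \<longleftrightarrow> 2 powr Rmin \<le> 1 + x / \<sigma>2"
    using pos by (simp add: le_log_iff)
  also have "\<dots> \<longleftrightarrow> x \<ge> \<sigma>2 * (2 powr Rmin - 1)" using s
    by (simp add: field_simps)
  finally show ?thesis .
qed

theorem proposition3:
  fixes g1 g2 hc :: "complex ^ 'n"
    and t1 t2 \<sigma>2 Pmax Rmin :: real
  assumes "t1 > 0" and "t2 > 0" and "\<sigma>2 > 0" and "Pmax > 0" and "Rmin \<ge> 0"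
  shows "(INF w \<in> {w. feasible_P1 hc \<sigma>2 Pmax Rmin w}. f_P1 t1 t2 g1 g2 w)
       = (INF p \<in> {(w, y1, y2). feasible_P2 hc \<sigma>2 Pmax Rmin w}.
            (case p of (w, y1, y2) \<Rightarrow> F_P2 t1 t2 g1 g2 w y1 y2))"
proof (rule antisym)
  have gam: "2 powr Rmin - 1 \<ge> 0" using assms(5) by (simp add: ge_one_powr_ge_zero)
  have p1: "feasible_P1 hc \<sigma>2 Pmax Rmin w \<longleftrightarrow>
     (cmod (herm hc w))\<^sup>2 \<ge> \<sigma>2 * (2 powr Rmin - 1) \<and> Re (herm w w) \<le> Pmax" for w
    unfolding feasible_P1_def using feas_iff[OF assms(3,5)] by simp
  show "(INF w \<in> {w. feasible_P1 hc \<sigma>2 Pmax Rmin w}. f_P1 t1 t2 g1 g2 w)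
       \<le> (INF p \<in> {(w, y1, y2). feasible_P2 hc \<sigma>2 Pmax Rmin w}.
            (case p of (w, y1, y2) \<Rightarrow> F_P2 t1 t2 g1 g2 w y1 y2))"
  proof (rule INF_greatest, clarsimp)
    fix w y1 y2 assume f2: "feasible_P2 hc \<sigma>2 Pmax Rmin w"
    have "feasible_P1 hc \<sigma>2 Pmax Rmin w"
    proof -
      obtain r where r: "herm hc w = complex_of_real r" using f2 unfolding feasible_P2_def
        by (auto elim: Reals_cases)
      have "sqrt (\<sigma>2 * (2 powr Rmin - 1)) \<le> r" using f2 r unfolding feasible_P2_def by simp
      then have "(sqrt (\<sigma>2 * (2 powr Rmin - 1)))\<^sup>2 \<le> r\<^sup>2"
        using gam assms(3) by (intro power_mono) auto
      then have "\<sigma>2 * (2 powr Rmin - 1) \<le> (cmod (herm hc w))\<^sup>2"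
        using gam assms(3) r by simp
      then show ?thesis using p1 f2 unfolding feasible_P2_def by simp
    qed
    then have "(INF w \<in> {w. feasible_P1 hc \<sigma>2 Pmax Rmin w}. f_P1 t1 t2 g1 g2 w) \<le> f_P1 t1 t2 g1 g2 w"
      by (intro INF_lower) simp
    also have "\<dots> \<le> F_P2 t1 t2 g1 g2 w y1 y2" by (rule F_ge[OF assms(1,2)])
    finally show "(INF w \<in> {w. feasible_P1 hc \<sigma>2 Pmax Rmin w}. f_P1 t1 t2 g1 g2 w) \<le> F_P2 t1 t2 g1 g2 w y1 y2" .
  qed
  show "(INF p \<in> {(w, y1, y2). feasible_P2 hc \<sigma>2 Pmax Rmin w}.
            (case p of (w, y1, y2) \<Rightarrow> F_P2 t1 t2 g1 g2 w y1 y2))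
     \<le> (INF w \<in> {w. feasible_P1 hc \<sigma>2 Pmax Rmin w}. f_P1 t1 t2 g1 g2 w)"
  proof (rule INF_greatest, clarsimp)
    fix w assume f1: "feasible_P1 hc \<sigma>2 Pmax Rmin w"
    define c where "c = herm hc w"
    define z where "z = (if c = 0 then 1 else cnj c / cmod c)"
    have zn: "cmod z = 1" by (simp add: z_def norm_divide)
    define w' where "w' = (\<chi> i. z * w $ i)"
    have hc': "herm hc w' = complex_of_real (cmod c)"
    proof (cases "c = 0")
      case True then show ?thesis unfolding w'_def herm_scale c_def[symmetric] z_def by simp
    next
      case False
      have cc: "cnj c * c = complex_of_real (cmod c * cmod c)"
        by (metis complex_norm_square mult.commute of_real_mult power2_eq_square)
      have "z * c = cnj c * c / complex_of_real (cmod c)" using False unfolding z_def by simp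
      also have "\<dots> = complex_of_real (cmod c)" unfolding cc using False by simp
      finally show ?thesis unfolding w'_def herm_scale c_def[symmetric] .
    qed
    have ww: "herm w' w' = herm w w" unfolding w'_def herm_scale2 zn by simp
    have g1': "cmod (herm g1 w') = cmod (herm g1 w)" unfolding w'_def herm_scale norm_mult zn by simp
    have g2': "cmod (herm g2 w') = cmod (herm g2 w)" unfolding w'_def herm_scale norm_mult zn by simp
    have "sqrt (\<sigma>2 * (2 powr Rmin - 1)) \<le> sqrt ((cmod c)\<^sup>2)"
      using f1 p1 c_def by (simp only: real_sqrt_le_iff)
    then have "feasible_P2 hc \<sigma>2 Pmax Rmin w'"
      unfolding feasible_P2_def hc' ww using f1 p1 by simp
    then have "(INF p \<in> {(w, y1, y2). feasible_P2 hc \<sigma>2 Pmax Rmin w}.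
            (case p of (w, y1, y2) \<Rightarrow> F_P2 t1 t2 g1 g2 w y1 y2))
       \<le> F_P2 t1 t2 g1 g2 w' (cmod (herm g1 w') / t1) (cmod (herm g2 w') / t2)"
      by (intro INF_lower2[of "(w', cmod (herm g1 w') / t1, cmod (herm g2 w') / t2)"]) auto
    also have "\<dots> = f_P1 t1 t2 g1 g2 w'" by (rule F_eq[OF assms(1,2)])
    also have "\<dots> = f_P1 t1 t2 g1 g2 w" unfolding f_P1_def g1' g2' ..
    finally show "(INF p \<in> {(w, y1, y2). feasible_P2 hc \<sigma>2 Pmax Rmin w}.
            (case p of (w, y1, y2) \<Rightarrow> F_P2 t1 t2 g1 g2 w y1 y2)) \<le> f_P1 t1 t2 g1 g2 w" .
  qed
qed

end
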